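(* Let $(G,H)$ be a discrete Hecke pair which has a finite generating set $S$. If $(G,H)$ is of subexponential growth (with respect to a length function $l$ on $(G,H)$), then $(G,H)$ is amenable.
   Context: A discrete Hecke pair is a group $G$ with a subgroup $H$ such that $[H:H\cap xHx^{-1}]<\infty$ for all $x$. $S\subseteq G$ generates $(G,H)$ if $H\backslash G=\bigcup_nH\hat S^n$, $\hat S=S\cup S^{-1}\cup\{e\}$. A length function on $(G,H)$ is $l:G\to[0,\infty)$ with $l(e)=0$, $l(g)=l(g^{-1})$, $l(gh)\le l(g)+l(h)$ and $l|_H=0$. Its growth function is $\mathcal G_l(r)=\#\{Hx\in H\backslash G: l(x)\le r\}$. $(G,H)$ has subexponential growth with respect to $l$ if $\mathcal G_l(r)<\infty$ for all $r\ge0$ and $\lim_{r\to\infty}\frac{\ln\mathcal G_l(r)}{r}=0$. The pair $(G,H)$ is amenable if whenever $G$ acts continuously by affine transformations on a compact convex subset $Q$ of a locally convex topological vector space and the restricted action of $H$ has a fixed point in $Q$, the action of $G$ has a fixed point in $Q$. *)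

theory Defs
  imports "HOL-Analysis.Analysis" "HOL-Algebra.Coset"
begin

text \<open>Discrete Hecke pair: H is a subgroup of G and H \<inter> xHx^-1 has finite index in H.\<close>
definition hecke_pair :: "('g, 'b) monoid_scheme \<Rightarrow> 'g set \<Rightarrow> bool" where
  "hecke_pair G H \<longleftrightarrow> group G \<and> subgroup H G \<and>
     (\<forall>x \<in> carrier G.
        finite {r_coset G (H \<inter> r_coset G (l_coset G x H) (inv\<^bsub>G\<^esub> x)) h | h. h \<in> H})"

fun set_pow :: "('g, 'b) monoid_scheme \<Rightarrow> 'g set \<Rightarrow> nat \<Rightarrow> 'g set" where
  "set_pow G A 0 = {\<one>\<^bsub>G\<^esub>}"
| "set_pow G A (Suc n) = set_mult G (set_pow G A n) A"

definition sym_hat :: "('g, 'b) monoid_scheme \<Rightarrow> 'g set \<Rightarrow> 'g set" where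
  "sym_hat G S = S \<union> (\<lambda>s. inv\<^bsub>G\<^esub> s) ` S \<union> {\<one>\<^bsub>G\<^esub>}"

definition generates_hecke :: "('g, 'b) monoid_scheme \<Rightarrow> 'g set \<Rightarrow> 'g set \<Rightarrow> bool" where
  "generates_hecke G H S \<longleftrightarrow> S \<subseteq> carrier G \<and>
     (\<Union>n. set_mult G H (set_pow G (sym_hat G S) n)) = carrier G"

definition length_function :: "('g, 'b) monoid_scheme \<Rightarrow> 'g set \<Rightarrow> ('g \<Rightarrow> real) \<Rightarrow> bool" where
  "length_function G H l \<longleftrightarrow>
     (\<forall>g \<in> carrier G. l g \<ge> 0) \<and> l \<one>\<^bsub>G\<^esub> = 0 \<and>
     (\<forall>g \<in> carrier G. l (inv\<^bsub>G\<^esub> g) = l g) \<and>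
     (\<forall>g \<in> carrier G. \<forall>h \<in> carrier G. l (g \<otimes>\<^bsub>G\<^esub> h) \<le> l g + l h) \<and>
     (\<forall>h \<in> H. l h = 0)"

definition growth_set :: "('g, 'b) monoid_scheme \<Rightarrow> 'g set \<Rightarrow> ('g \<Rightarrow> real) \<Rightarrow> real \<Rightarrow> 'g set set" where
  "growth_set G H l r = {r_coset G H x | x. x \<in> carrier G \<and> l x \<le> r}"

definition growth_fun :: "('g, 'b) monoid_scheme \<Rightarrow> 'g set \<Rightarrow> ('g \<Rightarrow> real) \<Rightarrow> real \<Rightarrow> nat" where
  "growth_fun G H l r = card (growth_set G H l r)"

definition subexp_growth :: "('g, 'b) monoid_scheme \<Rightarrow> 'g set \<Rightarrow> ('g \<Rightarrow> real) \<Rightarrow> bool" where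
  "subexp_growth G H l \<longleftrightarrow>
     (\<forall>r \<ge> 0. finite (growth_set G H l r)) \<and>
     ((\<lambda>r. ln (real (growth_fun G H l r)) / r) \<longlongrightarrow> 0) at_top"

text \<open>Locally convex (Hausdorff, via the class t2_space) real topological vector space structure
  on the type 'v: addition and scalar multiplication are jointly continuous, and 0 has a
  neighbourhood base of convex open sets.\<close>
definition lctvs :: "'v::{real_vector, t2_space} itself \<Rightarrow> bool" where
  "lctvs _ \<longleftrightarrow>
     continuous_on UNIV (\<lambda>p::'v \<times> 'v. fst p + snd p) \<and>
     continuous_on UNIV (\<lambda>p::real \<times> 'v. fst p *\<^sub>R snd p) \<and>
     (\<forall>U::'v set. open U \<and> 0 \<in> U \<longrightarrow> (\<exists>V. open V \<and> convex V \<and> 0 \<in> V \<and> V \<subseteq> U))"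

definition affine_action_on :: "('g, 'b) monoid_scheme \<Rightarrow> 'v::{real_vector, topological_space} set
     \<Rightarrow> ('g \<Rightarrow> 'v \<Rightarrow> 'v) \<Rightarrow> bool" where
  "affine_action_on G Q \<alpha> \<longleftrightarrow>
     (\<forall>g \<in> carrier G. \<alpha> g ` Q \<subseteq> Q \<and> continuous_on Q (\<alpha> g) \<and>
        (\<forall>x \<in> Q. \<forall>y \<in> Q. \<forall>t::real. 0 \<le> t \<and> t \<le> 1 \<longrightarrow>
           \<alpha> g (t *\<^sub>R x + (1 - t) *\<^sub>R y) = t *\<^sub>R \<alpha> g x + (1 - t) *\<^sub>R \<alpha> g y)) \<and>
     (\<forall>x \<in> Q. \<alpha> \<one>\<^bsub>G\<^esub> x = x) \<and>
     (\<forall>g \<in> carrier G. \<forall>h \<in> carrier G. \<forall>x \<in> Q. \<alpha> (g \<otimes>\<^bsub>G\<^esub> h) x = \<alpha> g (\<alpha> h x))"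

text \<open>Amenability of (G,H), tested against locally convex spaces living on the type 'v.
  Quantifying the type variable 'v at theorem level gives the full notion.\<close>
definition hecke_amenable_in :: "'v::{real_vector, t2_space} itself \<Rightarrow> ('g, 'b) monoid_scheme \<Rightarrow> 'g set \<Rightarrow> bool" where
  "hecke_amenable_in T G H \<longleftrightarrow>
     (lctvs T \<longrightarrow>
       (\<forall>(Q::'v set) \<alpha>. compact Q \<and> convex Q \<and> affine_action_on G Q \<alpha> \<and>
          (\<exists>q \<in> Q. \<forall>h \<in> H. \<alpha> h q = q) \<longrightarrow>
          (\<exists>q \<in> Q. \<forall>g \<in> carrier G. \<alpha> g q = q)))"

end

theory Submission
  imports Defs
begin

lemma small_mult:
  fixes Q :: "'v::{real_vector, t2_space} set"
  assumes cm: "continuous_on UNIV (\<lambda>p::real \<times> 'v. fst p *\<^sub>R snd p)"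
    and Q: "compact Q" and W: "open W" "0 \<in> W"
  shows "\<exists>\<delta>>0. \<forall>t a. \<bar>t\<bar> < \<delta> \<and> a \<in> Q \<longrightarrow> t *\<^sub>R a \<in> W"
proof -
  define S where "S = (\<lambda>p::real \<times> 'v. fst p *\<^sub>R snd p) -` W"
  have oS: "open S" unfolding S_def using cm W(1) open_vimage by blast
  have "\<forall>z\<in>Q. \<exists>d B. d > 0 \<and> open B \<and> z \<in> B \<and> (\<forall>t z'. \<bar>t\<bar> < d \<and> z' \<in> B \<longrightarrow> t *\<^sub>R z' \<in> W)"
  proof
    fix z assume "z \<in> Q"
    have "(0, z) \<in> S" using W(2) by (simp add: S_def)
    then obtain A B where AB: "open A" "open B" "(0,z) \<in> A \<times> B" "A \<times> B \<subseteq> S"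
      using open_prod_elim[OF oS] by metis
    then obtain d where d: "d > 0" "ball 0 d \<subseteq> A" using open_contains_ball by (metis SigmaE2)
    show "\<exists>d B. d > 0 \<and> open B \<and> z \<in> B \<and> (\<forall>t z'. \<bar>t\<bar> < d \<and> z' \<in> B \<longrightarrow> t *\<^sub>R z' \<in> W)"
    proof (intro exI conjI allI impI)
      fix t z' assume "\<bar>t\<bar> < d \<and> z' \<in> B"
      then have "(t, z') \<in> A \<times> B" using d by (auto simp: dist_real_def)
      then show "t *\<^sub>R z' \<in> W" using AB(4) by (auto simp: S_def)
    qed (use d AB in auto)
  qed
  then obtain d B where dB: "\<And>z. z \<in> Q \<Longrightarrow> d z > 0 \<and> open (B z) \<and> z \<in> B z \<and>
       (\<forall>t z'. \<bar>t\<bar> < d z \<and> z' \<in> B z \<longrightarrow> t *\<^sub>R z' \<in> W)"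
    by metis
  obtain C where C: "C \<subseteq> Q" "finite C" "Q \<subseteq> (\<Union>c\<in>C. B c)"
    using compactE_image[OF Q, of Q B] dB by blast
  define \<delta> where "\<delta> = Min (insert 1 (d ` C))"
  have "\<delta> > 0" unfolding \<delta>_def using C dB by auto
  moreover have "\<forall>t a. \<bar>t\<bar> < \<delta> \<and> a \<in> Q \<longrightarrow> t *\<^sub>R a \<in> W"
  proof (intro allI impI)
    fix t a assume ta: "\<bar>t\<bar> < \<delta> \<and> a \<in> Q"
    then obtain c where c: "c \<in> C" "a \<in> B c" using C by auto
    have "\<delta> \<le> d c" unfolding \<delta>_def using c C by auto
    then show "t *\<^sub>R a \<in> W" using dB[of c] c C ta by auto
  qed
  ultimately show ?thesis by blast
qed

lemma small_diff:
  fixes Q :: "'v::{real_vector, t2_space} set"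
  assumes ca: "continuous_on UNIV (\<lambda>p::'v \<times> 'v. fst p + snd p)"
    and cm: "continuous_on UNIV (\<lambda>p::real \<times> 'v. fst p *\<^sub>R snd p)"
    and Q: "compact Q" and W: "open W" "0 \<in> W"
  shows "\<exists>\<delta>>0. \<forall>t a b. \<bar>t\<bar> < \<delta> \<and> a \<in> Q \<and> b \<in> Q \<longrightarrow> t *\<^sub>R (a - b) \<in> W"
proof -
  define S where "S = (\<lambda>p::'v \<times> 'v. fst p + snd p) -` W"
  have oS: "open S" unfolding S_def using ca W(1) open_vimage by blast
  have "(0, 0) \<in> S" using W(2) by (simp add: S_def)
  then obtain A B where AB: "open A" "open B" "(0,0) \<in> A \<times> B" "A \<times> B \<subseteq> S"
    using open_prod_elim[OF oS] by metis
  obtain \<delta> where d: "\<delta> > 0" "\<forall>t a. \<bar>t\<bar> < \<delta> \<and> a \<in> Q \<longrightarrow> t *\<^sub>R a \<in> A \<inter> B"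
    using small_mult[OF cm Q, of "A \<inter> B"] AB by auto
  show ?thesis
  proof (intro exI conjI allI impI)
    fix t a b assume "\<bar>t\<bar> < \<delta> \<and> a \<in> Q \<and> b \<in> Q"
    then have "t *\<^sub>R a \<in> A" "(-t) *\<^sub>R b \<in> B" using d(2)[rule_format, of t a] d(2)[rule_format, of "-t" b] by auto
    then have "t *\<^sub>R a + (-t) *\<^sub>R b \<in> W" using AB(4) by (auto simp: S_def)
    then show "t *\<^sub>R (a - b) \<in> W" by (simp add: scaleR_diff_right)
  qed (use d in auto)
qed

lemma cont_sub:
  fixes dummy :: "'v::{real_vector, t2_space}"
  assumes ca: "continuous_on UNIV (\<lambda>p::'v \<times> 'v. fst p + snd p)"
    and cm: "continuous_on UNIV (\<lambda>p::real \<times> 'v. fst p *\<^sub>R snd p)"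
  shows "continuous_on UNIV (\<lambda>p::'v \<times> 'v. fst p + (-1) *\<^sub>R snd p)"
proof -
  have c0: "continuous_on UNIV (\<lambda>p::'v \<times> 'v. (-1::real, snd p))"
    by (intro continuous_on_Pair continuous_on_const continuous_on_snd continuous_on_id)
  have c1: "continuous_on UNIV (\<lambda>p::'v \<times> 'v. (-1::real) *\<^sub>R snd p)"
    using continuous_on_compose2[OF cm c0 subset_UNIV] by (simp only: fst_conv snd_conv)
  have c2: "continuous_on UNIV (\<lambda>p::'v \<times> 'v. (fst p, (-1::real) *\<^sub>R snd p))"
    by (intro continuous_on_Pair continuous_on_fst c1 continuous_on_id)
  show ?thesis
    using continuous_on_compose2[OF ca c2 subset_UNIV] by (simp only: fst_conv snd_conv)
qed

lemma fix_from_approx: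
  fixes Q :: "'v::{real_vector, t2_space} set" and \<alpha> :: "'g \<Rightarrow> 'v \<Rightarrow> 'v"
  assumes ca: "continuous_on UNIV (\<lambda>p::'v \<times> 'v. fst p + snd p)"
    and cm: "continuous_on UNIV (\<lambda>p::real \<times> 'v. fst p *\<^sub>R snd p)"
    and Q: "compact Q"
    and maps: "\<forall>g\<in>C. \<alpha> g ` Q \<subseteq> Q \<and> continuous_on Q (\<alpha> g)"
    and q: "\<forall>k. q k \<in> Q"
    and approx: "\<forall>g\<in>C. \<forall>\<epsilon>>0. eventually (\<lambda>k. \<exists>t a b. 0 \<le> t \<and> t \<le> \<epsilon> \<and> a \<in> Q \<and> b \<in> Q \<and>
                     \<alpha> g (q k) - q k = t *\<^sub>R (a - b)) sequentially"
  shows "\<exists>p\<in>Q. \<forall>g\<in>C. \<alpha> g p = p"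
proof -
  have "filtermap q sequentially \<noteq> bot" by (simp add: filtermap_bot_iff)
  moreover have "eventually (\<lambda>x. x \<in> Q) (filtermap q sequentially)"
    using q by (simp add: eventually_filtermap)
  ultimately obtain p where p: "p \<in> Q" "inf (nhds p) (filtermap q sequentially) \<noteq> bot"
    using Q unfolding compact_filter by blast
  have cluster: "\<exists>k. q k \<in> U \<and> P k" if U: "open U" "p \<in> U" and P: "eventually P sequentially" for U P
  proof (rule ccontr)
    assume "\<not> ?thesis"
    then have "eventually (\<lambda>k. q k \<notin> U) sequentially" using P by (auto elim: eventually_mono)
    then have e1: "eventually (\<lambda>y. y \<notin> U) (filtermap q sequentially)" by (simp add: eventually_filtermap)
    have e2: "eventually (\<lambda>y. y \<in> U) (nhds p)" using U eventually_nhds by blast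
    have "eventually (\<lambda>_. False) (inf (nhds p) (filtermap q sequentially))"
      unfolding eventually_inf using e1 e2 by blast
    then show False using p(2) by (simp add: eventually_False)
  qed
  have "\<alpha> g p = p" if g: "g \<in> C" for g
  proof (rule ccontr)
    assume ne: "\<alpha> g p \<noteq> p"
    then obtain U V where UV: "open U" "open V" "p \<in> U" "\<alpha> g p \<in> V" "U \<inter> V = {}"
      using hausdorff[of p "\<alpha> g p"] by metis
    define S where "S = (\<lambda>p::'v \<times> 'v. fst p + (-1) *\<^sub>R snd p) -` V"
    have oS: "open S" unfolding S_def using cont_sub[OF ca cm] UV(2) open_vimage by blast
    have "(\<alpha> g p, 0) \<in> S" using UV(4) by (simp add: S_def)
    then obtain V0 W where VW: "open V0" "open W" "(\<alpha> g p, 0) \<in> V0 \<times> W" "V0 \<times> W \<subseteq> S"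
      using open_prod_elim[OF oS] by metis
    have cg: "continuous_on Q (\<alpha> g)" using maps g by blast
    obtain A where A: "open A" "A \<inter> Q = \<alpha> g -` V0 \<inter> Q"
      using cg VW(1) unfolding continuous_on_open_invariant by metis
    have pA: "p \<in> A" using A p VW by auto
    obtain \<delta> where d: "\<delta> > 0" "\<forall>t a b. \<bar>t\<bar> < \<delta> \<and> a \<in> Q \<and> b \<in> Q \<longrightarrow> t *\<^sub>R (a - b) \<in> W"
      using small_diff[OF ca cm Q VW(2)] VW(3) by auto
    have ev: "eventually (\<lambda>k. \<exists>t a b. 0 \<le> t \<and> t \<le> \<delta>/2 \<and> a \<in> Q \<and> b \<in> Q \<and>
                     \<alpha> g (q k) - q k = t *\<^sub>R (a - b)) sequentially"
    proof -
      have "\<delta>/2 > 0" using d(1) by simp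
      then show ?thesis using approx g by blast
    qed
    obtain k t a b where k: "q k \<in> U \<inter> A" "0 \<le> t" "t \<le> \<delta>/2" "a \<in> Q" "b \<in> Q"
        "\<alpha> g (q k) - q k = t *\<^sub>R (a - b)"
      using cluster[OF _ _ ev, of "U \<inter> A"] UV A pA by auto
    have "\<alpha> g (q k) \<in> V0" using k(1) A q by auto
    moreover have "\<alpha> g (q k) - q k \<in> W"
    proof -
      have "\<bar>t\<bar> < \<delta>" using k(2,3) d(1) by linarith
      then show ?thesis using d(2) k(4,5,6) by auto
    qed
    ultimately have "(\<alpha> g (q k), \<alpha> g (q k) - q k) \<in> S" using VW(4) by auto
    then have "q k \<in> V" by (simp add: S_def)
    then show False using k(1) UV(5) by auto
  qed
  then show ?thesis using p by blast
qed

lemma growth_choice: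
  fixes N :: "real \<Rightarrow> nat" and k :: nat
  assumes N1: "\<And>r. r \<ge> 0 \<Longrightarrow> N r \<ge> 1"
    and lim: "((\<lambda>r. ln (real (N r)) / r) \<longlongrightarrow> 0) at_top"
    and k: "k > 0"
  shows "\<exists>r\<ge>0. real (N (r + real k)) \<le> (1 + 1 / real k) * real (N r)"
proof (rule ccontr)
  assume "\<not> ?thesis"
  then have gt: "\<And>r. r \<ge> 0 \<Longrightarrow> real (N (r + real k)) > (1 + 1 / real k) * real (N r)"
    by force
  define b where "b = 1 + 1 / real k"
  have b1: "b > 1" using k by (simp add: b_def)
  have pw: "real (N (real n * real k)) \<ge> b ^ n" for n
  proof (induction n)
    case 0 then show ?case using N1[of 0] by simp
  next
    case (Suc n)
    have e1: "real (N (real (Suc n) * real k)) = real (N (real n * real k + real k))"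
      by (simp add: algebra_simps)
    have e2: "real (N (real n * real k + real k)) \<ge> b * real (N (real n * real k))"
      using gt[of "real n * real k"] b_def by simp
    have e3: "b * real (N (real n * real k)) \<ge> b * b ^ n"
      using Suc b1 by (intro mult_left_mono) auto
    show ?case using e1 e2 e3 by simp
  qed
  define c where "c = ln b / real k"
  have c0: "c > 0" using b1 k by (simp add: c_def)
  have "eventually (\<lambda>r. ln (real (N r)) / r < c) at_top"
    using order_tendstoD(2)[OF lim c0] .
  then obtain R where R: "\<And>r. r \<ge> R \<Longrightarrow> ln (real (N r)) / r < c"
    by (auto simp: eventually_at_top_linorder)
  define n where "n = nat \<lceil>R\<rceil> + 1"
  have n1: "n \<ge> 1" by (simp add: n_def)
  have "real n \<ge> R" unfolding n_def by linarith
  moreover have "real n * real k \<ge> real n"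
  proof -
    have "real k \<ge> 1" using k by simp
    then have "real n * 1 \<le> real n * real k" by (intro mult_left_mono) auto
    then show ?thesis by simp
  qed
  ultimately have "real n * real k \<ge> R" by linarith
  then have lt: "ln (real (N (real n * real k))) / (real n * real k) < c" using R by blast
  have pos: "real n * real k > 0" using n1 k by simp
  have "ln (b ^ n) \<le> ln (real (N (real n * real k)))"
    using pw[of n] b1 N1[of "real n * real k"] pos by (subst ln_le_cancel_iff) auto
  then have "real n * ln b \<le> ln (real (N (real n * real k)))"
    using b1 by (simp add: ln_realpow)
  then have "real n * ln b / (real n * real k) \<le> ln (real (N (real n * real k))) / (real n * real k)"
    using pos by (intro divide_right_mono) auto
  moreover have "real n * ln b / (real n * real k) = c" using n1 k by (simp add: c_def)
  ultimately show False using lt by linarith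
qed

lemma affine_sum:
  fixes T :: "'v::real_vector \<Rightarrow> 'v" and Q :: "'v set"
  assumes cQ: "convex Q"
    and aff: "\<forall>x\<in>Q. \<forall>y\<in>Q. \<forall>t::real. 0 \<le> t \<and> t \<le> 1 \<longrightarrow>
           T (t *\<^sub>R x + (1 - t) *\<^sub>R y) = t *\<^sub>R T x + (1 - t) *\<^sub>R T y"
    and fin: "finite A"
  shows "(\<forall>i\<in>A. 0 \<le> w i) \<Longrightarrow> sum w A = 1 \<Longrightarrow> (\<forall>i\<in>A. p i \<in> Q) \<Longrightarrow>
     T (\<Sum>i\<in>A. w i *\<^sub>R p i) = (\<Sum>i\<in>A. w i *\<^sub>R T (p i))"
  using fin
proof (induction A arbitrary: w rule: finite_induct)
  case empty then show ?case by simp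
next
  case (insert a A)
  define s where "s = sum w A"
  have s0: "s \<ge> 0" unfolding s_def using insert by (auto intro: sum_nonneg)
  have wa: "w a = 1 - s" using insert unfolding s_def by simp
  show ?case
  proof (cases "s = 0")
    case True
    then have "\<forall>i\<in>A. w i = 0" using insert s_def sum_nonneg_eq_0_iff[of A w] by auto
    then show ?thesis using insert wa True by simp
  next
    case False
    then have sp: "s > 0" using s0 by simp
    define w' where "w' = (\<lambda>i. w i / s)"
    have w'1: "sum w' A = 1" unfolding w'_def using sp by (simp add: sum_divide_distrib[symmetric] s_def)
    have w'0: "\<forall>i\<in>A. 0 \<le> w' i" using insert sp by (simp add: w'_def)
    define z where "z = (\<Sum>i\<in>A. w' i *\<^sub>R p i)"
    have zQ: "z \<in> Q" unfolding z_def using convex_sum[OF insert(1) cQ w'1] w'0 insert by auto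
    have IH: "T z = (\<Sum>i\<in>A. w' i *\<^sub>R T (p i))" unfolding z_def using insert(3)[OF w'0 w'1] insert by auto
    have sz: "s *\<^sub>R z = (\<Sum>i\<in>A. w i *\<^sub>R p i)"
      unfolding z_def w'_def using sp by (simp add: scaleR_sum_right)
    have sT: "s *\<^sub>R (\<Sum>i\<in>A. w' i *\<^sub>R T (p i)) = (\<Sum>i\<in>A. w i *\<^sub>R T (p i))"
      unfolding w'_def using sp by (simp add: scaleR_sum_right)
    have wa01: "0 \<le> w a \<and> w a \<le> 1" using insert wa s0 by auto
    have "T (\<Sum>i\<in>insert a A. w i *\<^sub>R p i) = T (w a *\<^sub>R p a + (1 - w a) *\<^sub>R z)"
      using insert sz wa by simp
    also have "\<dots> = w a *\<^sub>R T (p a) + (1 - w a) *\<^sub>R T z"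
      using aff zQ insert wa01 by auto
    also have "\<dots> = (\<Sum>i\<in>insert a A. w i *\<^sub>R T (p i))"
      using insert IH sT wa by simp
    finally show ?thesis .
  qed
qed

theorem proposition4p5:
  fixes G :: "('g, 'b) monoid_scheme" and H S :: "'g set" and l :: "'g \<Rightarrow> real"
  assumes "hecke_pair G H"
    and "finite S" and "generates_hecke G H S"
    and "length_function G H l"
    and "subexp_growth G H l"
  shows "hecke_amenable_in TYPE('v::{real_vector, t2_space}) G H"
  unfolding hecke_amenable_in_def
proof (intro impI allI)
  fix Q :: "'v set" and \<alpha> :: "'g \<Rightarrow> 'v \<Rightarrow> 'v"
  assume lc: "lctvs TYPE('v)"
  assume QA: "compact Q \<and> convex Q \<and> affine_action_on G Q \<alpha> \<and> (\<exists>q\<in>Q. \<forall>h\<in>H. \<alpha> h q = q)"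
  have ca: "continuous_on UNIV (\<lambda>p::'v \<times> 'v. fst p + snd p)"
    and cm: "continuous_on UNIV (\<lambda>p::real \<times> 'v. fst p *\<^sub>R snd p)"
    using lc unfolding lctvs_def by auto
  have cQ: "compact Q" and vQ: "convex Q" and act: "affine_action_on G Q \<alpha>" using QA by auto
  obtain q0 where q0: "q0 \<in> Q" "\<forall>h\<in>H. \<alpha> h q0 = q0" using QA by auto
  have grp: "group G" and sub: "subgroup H G" using assms(1) unfolding hecke_pair_def by auto
  interpret group G by (rule grp)
  have Hc: "H \<subseteq> carrier G" using sub subgroup.subset by blast
  have l0: "\<forall>g \<in> carrier G. l g \<ge> 0" and l1: "l \<one>\<^bsub>G\<^esub> = 0"
    and linv: "\<forall>g \<in> carrier G. l (inv\<^bsub>G\<^esub> g) = l g"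
    and ltri: "\<forall>g \<in> carrier G. \<forall>h \<in> carrier G. l (g \<otimes>\<^bsub>G\<^esub> h) \<le> l g + l h"
    and lH: "\<forall>h \<in> H. l h = 0"
    using assms(4) unfolding length_function_def by auto
  have amaps: "\<forall>g\<in>carrier G. \<alpha> g ` Q \<subseteq> Q \<and> continuous_on Q (\<alpha> g)"
    and aaff: "\<forall>g\<in>carrier G. \<forall>x \<in> Q. \<forall>y \<in> Q. \<forall>t::real. 0 \<le> t \<and> t \<le> 1 \<longrightarrow>
           \<alpha> g (t *\<^sub>R x + (1 - t) *\<^sub>R y) = t *\<^sub>R \<alpha> g x + (1 - t) *\<^sub>R \<alpha> g y"
    and acomp: "\<forall>g \<in> carrier G. \<forall>h \<in> carrier G. \<forall>x \<in> Q. \<alpha> (g \<otimes>\<^bsub>G\<^esub> h) x = \<alpha> g (\<alpha> h x)"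
    using act unfolding affine_action_on_def by auto
  have fin: "\<And>r. r \<ge> 0 \<Longrightarrow> finite (growth_set G H l r)"
    and lim: "((\<lambda>r. ln (real (growth_fun G H l r)) / r) \<longlongrightarrow> 0) at_top"
    using assms(5) unfolding subexp_growth_def by auto
  define B where "B = growth_set G H l"
  define N where "N = growth_fun G H l"
  have N_def': "\<And>r. N r = card (B r)" unfolding N_def B_def growth_fun_def by simp
  have memB: "\<And>C r. C \<in> B r \<longleftrightarrow> (\<exists>x. C = r_coset G H x \<and> x \<in> carrier G \<and> l x \<le> r)"
    unfolding B_def growth_set_def by auto
  have cos_len: "l x \<le> l y" if "x \<in> carrier G" "y \<in> carrier G" "r_coset G H x = r_coset G H y" for x y
  proof -
    have "x \<in> r_coset G H y" using rcos_self[OF that(1) sub] that(3) by simp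
    then obtain h where h: "h \<in> H" "x = h \<otimes>\<^bsub>G\<^esub> y" unfolding r_coset_def by auto
    then have "l x \<le> l h + l y" using ltri Hc that by auto
    then show ?thesis using lH h by auto
  qed
  have memB2: "r_coset G H x \<in> B r \<longleftrightarrow> l x \<le> r" if "x \<in> carrier G" for x r
  proof
    assume "r_coset G H x \<in> B r"
    then obtain y where "r_coset G H x = r_coset G H y" "y \<in> carrier G" "l y \<le> r" using memB by blast
    then show "l x \<le> r" using cos_len[of x y] that by auto
  next
    assume "l x \<le> r" then show "r_coset G H x \<in> B r" using memB that by blast
  qed
  have Bmono: "B r \<subseteq> B s" if "r \<le> s" for r s using that memB by force
  have N1: "N r \<ge> 1" if "r \<ge> 0" for r
  proof -
    have "r_coset G H \<one>\<^bsub>G\<^esub> \<in> B r" using memB2[of "\<one>\<^bsub>G\<^esub>" r] l1 that by simp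
    then show ?thesis using fin[OF that] N_def' B_def by (metis One_nat_def Suc_leI card_gt_0_iff empty_iff)
  qed
  define f where "f C = \<alpha> (inv\<^bsub>G\<^esub> (SOME y. y \<in> C)) q0" for C
  have f_eq: "f (r_coset G H x) = \<alpha> (inv\<^bsub>G\<^esub> x) q0" if x: "x \<in> carrier G" for x
  proof -
    have ex: "\<exists>y. y \<in> r_coset G H x" using rcos_self[OF x sub] by blast
    define y where "y = (SOME y. y \<in> r_coset G H x)"
    have "y \<in> r_coset G H x" unfolding y_def using someI_ex[OF ex] .
    then obtain h where h: "h \<in> H" "y = h \<otimes>\<^bsub>G\<^esub> x" unfolding r_coset_def by auto
    have hc: "h \<in> carrier G" using h Hc by auto
    have ih: "inv\<^bsub>G\<^esub> h \<in> H" by (rule subgroup.m_inv_closed[OF sub h(1)])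
    have "f (r_coset G H x) = \<alpha> (inv\<^bsub>G\<^esub> y) q0" unfolding f_def y_def by simp
    also have "\<dots> = \<alpha> (inv\<^bsub>G\<^esub> x \<otimes>\<^bsub>G\<^esub> inv\<^bsub>G\<^esub> h) q0" using h hc x by (simp add: inv_mult_group)
    also have "\<dots> = \<alpha> (inv\<^bsub>G\<^esub> x) (\<alpha> (inv\<^bsub>G\<^esub> h) q0)" using acomp hc x q0 by simp
    also have "\<dots> = \<alpha> (inv\<^bsub>G\<^esub> x) q0" using q0 ih by simp
    finally show ?thesis .
  qed
  have fQ: "f (r_coset G H x) \<in> Q" if x: "x \<in> carrier G" for x
    using f_eq[OF x] amaps x q0 by auto
  have fQB: "f C \<in> Q" if "C \<in> B r" for C r using that memB fQ by auto
  have f_act: "\<alpha> g (f (r_coset G H x)) = f (r_coset G H (x \<otimes>\<^bsub>G\<^esub> inv\<^bsub>G\<^esub> g))"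
    if x: "x \<in> carrier G" and g: "g \<in> carrier G" for x g
  proof -
    have "\<alpha> g (f (r_coset G H x)) = \<alpha> (g \<otimes>\<^bsub>G\<^esub> inv\<^bsub>G\<^esub> x) q0"
      using f_eq[OF x] acomp x g q0 by simp
    also have "g \<otimes>\<^bsub>G\<^esub> inv\<^bsub>G\<^esub> x = inv\<^bsub>G\<^esub> (x \<otimes>\<^bsub>G\<^esub> inv\<^bsub>G\<^esub> g)"
      using x g by (simp add: inv_mult_group)
    finally show ?thesis using f_eq x g by simp
  qed
  define \<tau> where "\<tau> g C = r_coset G C (inv\<^bsub>G\<^esub> g)" for g C
  have tau_eq: "\<tau> g (r_coset G H x) = r_coset G H (x \<otimes>\<^bsub>G\<^esub> inv\<^bsub>G\<^esub> g)"
    if "x \<in> carrier G" "g \<in> carrier G" for x g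
    unfolding \<tau>_def using coset_mult_assoc[OF Hc] that by simp
  have tau_inj: "inj_on (\<tau> g) (B r)" if g: "g \<in> carrier G" for g r
  proof (rule inj_on_inverseI)
    fix C assume "C \<in> B r"
    then obtain x where x: "C = r_coset G H x" "x \<in> carrier G" using memB by blast
    have "r_coset G (\<tau> g C) g = r_coset G H (x \<otimes>\<^bsub>G\<^esub> inv\<^bsub>G\<^esub> g \<otimes>\<^bsub>G\<^esub> g)"
      using tau_eq x g coset_mult_assoc[OF Hc] by simp
    also have "\<dots> = C" using x g by (simp add: m_assoc)
    finally show "r_coset G (\<tau> g C) g = C" .
  qed
  define avg where "avg r = (1 / real (N r)) *\<^sub>R (\<Sum>C\<in>B r. f C)" for r
  have avgQ: "avg r \<in> Q" if r: "r \<ge> 0" for r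
  proof -
    have "avg r = (\<Sum>C\<in>B r. (1 / real (N r)) *\<^sub>R f C)" unfolding avg_def by (simp add: scaleR_sum_right)
    moreover have "(\<Sum>C\<in>B r. (1 / real (N r)) *\<^sub>R f C) \<in> Q"
      using convex_sum[OF fin[OF r, folded B_def] vQ, of "\<lambda>_. 1 / real (N r)" f] N1[OF r] N_def' fQB
      by auto
    ultimately show ?thesis by simp
  qed
  have key: "\<exists>t a b. 0 \<le> t \<and> t \<le> (real (N (r + l g)) - real (N r)) / real (N r) \<and> a \<in> Q \<and> b \<in> Q \<and>
              \<alpha> g (avg r) - avg r = t *\<^sub>R (a - b)"
    if r: "r \<ge> 0" and g: "g \<in> carrier G" for r g
  proof -
    define Br where "Br = B r"
    define n where "n = real (N r)"
    define A where "A = \<tau> g ` Br"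
    have finB: "finite Br" using fin[OF r] unfolding Br_def B_def .
    have n1: "n \<ge> 1" using N1[OF r] unfolding n_def by simp
    have cardB: "card Br = N r" using N_def' Br_def by simp
    have lg0: "l g \<ge> 0" using l0 g by auto
    have rg: "r + l g \<ge> 0" using r lg0 by simp
    have finB': "finite (B (r + l g))" using fin[OF rg] unfolding B_def .
    have BB': "Br \<subseteq> B (r + l g)" unfolding Br_def using Bmono lg0 by simp
    have AB': "A \<subseteq> B (r + l g)"
    proof
      fix D assume "D \<in> A"
      then obtain C where C: "C \<in> Br" "D = \<tau> g C" unfolding A_def by auto
      then obtain x where x: "C = r_coset G H x" "x \<in> carrier G" "l x \<le> r" using memB Br_def by blast
      have D: "D = r_coset G H (x \<otimes>\<^bsub>G\<^esub> inv\<^bsub>G\<^esub> g)" using tau_eq x C g by simp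
      have "l (x \<otimes>\<^bsub>G\<^esub> inv\<^bsub>G\<^esub> g) \<le> l x + l (inv\<^bsub>G\<^esub> g)" using ltri x g by simp
      also have "\<dots> \<le> r + l g" using linv g x by simp
      finally show "D \<in> B (r + l g)" using D memB2 x g by simp
    qed
    have finA: "finite A" using finB A_def by simp
    have cardA: "card A = card Br" unfolding A_def using card_image tau_inj[OF g] Br_def by blast
    have SA: "(\<Sum>D\<in>A. f D) = (\<Sum>C\<in>Br. \<alpha> g (f C))"
    proof -
      have "(\<Sum>D\<in>A. f D) = (\<Sum>C\<in>Br. f (\<tau> g C))"
        unfolding A_def using sum.reindex[OF tau_inj[OF g, of r]] Br_def by simp
      also have "\<dots> = (\<Sum>C\<in>Br. \<alpha> g (f C))"
      proof (rule sum.cong)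
        fix C assume "C \<in> Br"
        then obtain x where x: "C = r_coset G H x" "x \<in> carrier G" using memB Br_def by blast
        then show "f (\<tau> g C) = \<alpha> g (f C)" using f_act tau_eq g by simp
      qed simp
      finally show ?thesis .
    qed
    have ag: "\<alpha> g (avg r) = (1 / n) *\<^sub>R (\<Sum>D\<in>A. f D)"
    proof -
      have "avg r = (\<Sum>C\<in>Br. (1 / n) *\<^sub>R f C)" unfolding avg_def n_def Br_def by (simp add: scaleR_sum_right)
      then have "\<alpha> g (avg r) = (\<Sum>C\<in>Br. (1 / n) *\<^sub>R \<alpha> g (f C))"
        using affine_sum[OF vQ, of "\<alpha> g" Br "\<lambda>_. 1 / n" f] aaff g finB n1 cardB fQB Br_def n_def
        by auto
      then show ?thesis using SA by (simp add: scaleR_sum_right)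
    qed
    have av: "avg r = (1 / n) *\<^sub>R (\<Sum>C\<in>Br. f C)" unfolding avg_def n_def Br_def by simp
    have diff: "\<alpha> g (avg r) - avg r = (1 / n) *\<^sub>R ((\<Sum>D\<in>A - Br. f D) - (\<Sum>D\<in>Br - A. f D))"
    proof -
      have "(\<Sum>D\<in>A. f D) = (\<Sum>D\<in>A \<inter> Br. f D) + (\<Sum>D\<in>A - Br. f D)" using sum.Int_Diff[OF finA] by blast
      moreover have "(\<Sum>D\<in>Br. f D) = (\<Sum>D\<in>Br \<inter> A. f D) + (\<Sum>D\<in>Br - A. f D)" using sum.Int_Diff[OF finB] by blast
      moreover have "Br \<inter> A = A \<inter> Br" by blast
      ultimately show ?thesis using ag av by (simp add: scaleR_diff_right scaleR_add_right)
    qed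
    define m where "m = card (A - Br)"
    have m1: "card (Br - A) = m"
      unfolding m_def using card_Diff_subset_Int[of A Br] card_Diff_subset_Int[of Br A] finA finB cardA
      by (simp add: Int_commute)
    have "A - Br \<subseteq> B (r + l g) - Br" using AB' by blast
    then have "m \<le> card (B (r + l g) - Br)" unfolding m_def using finB' by (intro card_mono) auto
    also have "\<dots> = N (r + l g) - N r" using card_Diff_subset[OF finB BB'] N_def' cardB by simp
    finally have mle0: "m \<le> N (r + l g) - N r" .
    have "N r \<le> N (r + l g)" using card_mono[OF finB' BB'] N_def'[of "r + l g"] cardB by simp
    then have mle: "real m \<le> real (N (r + l g)) - real (N r)" using mle0 by linarith
    have finAB: "finite (A - Br)" "finite (Br - A)" using finA finB by auto
    have fAB: "\<forall>D\<in>A - Br. f D \<in> Q" "\<forall>D\<in>Br - A. f D \<in> Q" using AB' fQB Br_def by auto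
    show ?thesis
    proof (cases "m = 0")
      case True
      have c1: "card (A - Br) = 0" using True m_def by simp
      have c2: "card (Br - A) = 0" using True m1 by simp
      have e1: "A - Br = {}" using finAB(1) c1 by simp
      have e2: "Br - A = {}" using finAB(2) c2 by simp
      have "\<alpha> g (avg r) - avg r = 0 *\<^sub>R (q0 - q0)" using diff e1 e2 by simp
      moreover have "0 \<le> (real (N (r + l g)) - real (N r)) / real (N r)"
        using mle n1 n_def by simp
      ultimately show ?thesis using q0 by blast
    next
      case False
      then have mp: "real m > 0" by simp
      define a where "a = (\<Sum>D\<in>A - Br. (1 / real m) *\<^sub>R f D)"
      define b where "b = (\<Sum>D\<in>Br - A. (1 / real m) *\<^sub>R f D)"
      have aQ: "a \<in> Q" unfolding a_def
        using convex_sum[OF finAB(1) vQ, of "\<lambda>_. 1 / real m" f] fAB mp m_def by auto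
      have bQ: "b \<in> Q" unfolding b_def
        using convex_sum[OF finAB(2) vQ, of "\<lambda>_. 1 / real m" f] fAB mp m1 by auto
      have "(real m / n) *\<^sub>R (a - b) = (1 / n) *\<^sub>R (real m *\<^sub>R (a - b))" by simp
      also have "real m *\<^sub>R (a - b) = (\<Sum>D\<in>A - Br. f D) - (\<Sum>D\<in>Br - A. f D)"
        unfolding a_def b_def using mp by (simp add: scaleR_sum_right[symmetric] scaleR_diff_right)
      finally have eq: "\<alpha> g (avg r) - avg r = (real m / n) *\<^sub>R (a - b)" using diff by simp
      have "real m / n \<le> (real (N (r + l g)) - real (N r)) / real (N r)"
        using mle n1 n_def by (simp add: divide_right_mono)
      moreover have "0 \<le> real m / n" using n1 by simp
      ultimately show ?thesis using eq aQ bQ by blast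
    qed
  qed
  have lim': "((\<lambda>r. ln (real (N r)) / r) \<longlongrightarrow> 0) at_top" using lim unfolding N_def .
  have "\<forall>k. \<exists>r\<ge>0. real (N (r + real (Suc k))) \<le> (1 + 1 / real (Suc k)) * real (N r)"
    using growth_choice[OF N1 lim'] by blast
  then obtain rr where rr: "\<And>k. rr k \<ge> 0"
    "\<And>k. real (N (rr k + real (Suc k))) \<le> (1 + 1 / real (Suc k)) * real (N (rr k))"
    by metis
  define q where "q k = avg (rr k)" for k
  have qQ: "\<forall>k. q k \<in> Q" using avgQ rr(1) q_def by simp
  have approx: "\<forall>g\<in>carrier G. \<forall>\<epsilon>>0. eventually (\<lambda>k. \<exists>t a b. 0 \<le> t \<and> t \<le> \<epsilon> \<and> a \<in> Q \<and> b \<in> Q \<and>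
                     \<alpha> g (q k) - q k = t *\<^sub>R (a - b)) sequentially"
  proof (intro ballI allI impI)
    fix g :: 'g and \<epsilon> :: real
    assume g: "g \<in> carrier G" and e: "\<epsilon> > 0"
    define K where "K = nat \<lceil>max (l g) (1 / \<epsilon>)\<rceil>"
    show "eventually (\<lambda>k. \<exists>t a b. 0 \<le> t \<and> t \<le> \<epsilon> \<and> a \<in> Q \<and> b \<in> Q \<and>
                     \<alpha> g (q k) - q k = t *\<^sub>R (a - b)) sequentially"
      unfolding eventually_sequentially
    proof (rule exI[of _ K], intro allI impI)
      fix k assume kK: "K \<le> k"
      define r where "r = rr k"
      have r0: "r \<ge> 0" using rr r_def by simp
      have K1: "real K \<ge> l g" "real K \<ge> 1 / \<epsilon>" unfolding K_def by linarith+
      have kk: "real (Suc k) \<ge> l g" "real (Suc k) \<ge> 1 / \<epsilon>" 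
      proof -
        have "real K \<le> real (Suc k)" using kK by simp
        then show "real (Suc k) \<ge> l g" "real (Suc k) \<ge> 1 / \<epsilon>" using K1 by linarith+
      qed
      obtain t a b where tab: "0 \<le> t" "t \<le> (real (N (r + l g)) - real (N r)) / real (N r)"
        "a \<in> Q" "b \<in> Q" "\<alpha> g (avg r) - avg r = t *\<^sub>R (a - b)"
        using key[OF r0 g] by blast
      have lg0: "l g \<ge> 0" using l0 g by auto
      have "N (r + l g) \<le> N (r + real (Suc k))"
        using card_mono[OF fin[of "r + real (Suc k)", folded B_def] Bmono[of "r + l g" "r + real (Suc k)"]]
          N_def' r0 kk by simp
      then have "real (N (r + l g)) - real (N r) \<le> real (N (r + real (Suc k))) - real (N r)" by simp
      also have "\<dots> \<le> (1 / real (Suc k)) * real (N r)" using rr(2)[of k] r_def by (simp add: algebra_simps)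
      finally have "(real (N (r + l g)) - real (N r)) / real (N r) \<le> 1 / real (Suc k)"
        using N1[OF r0] by (simp add: divide_le_eq)
      also have "1 / real (Suc k) \<le> \<epsilon>" using kk(2) e by (simp add: divide_le_eq mult.commute)
      finally have "t \<le> \<epsilon>" using tab(2) by linarith
      moreover have "\<alpha> g (q k) - q k = t *\<^sub>R (a - b)" using tab(5) unfolding q_def r_def .
      ultimately show "\<exists>t a b. 0 \<le> t \<and> t \<le> \<epsilon> \<and> a \<in> Q \<and> b \<in> Q \<and> \<alpha> g (q k) - q k = t *\<^sub>R (a - b)"
        using tab(1,3,4) by blast
    qed
  qed
  show "\<exists>q\<in>Q. \<forall>g\<in>carrier G. \<alpha> g q = q"
    using fix_from_approx[OF ca cm cQ amaps qQ approx] .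
qed

end
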